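(* Let $p$ be a prime, $k>0$ an integer, and $G_{p,k}=C_{p^\infty}\times C_k\times\mathbf{T}$. For a finite subgroup $F$ of $C_k\times\mathbf{T}$ and a homomorphism $f:C_{p^\infty}\to(C_k\times\mathbf{T})/F$, set $H_{F,f}:=q_F^{-1}(\mathrm{Graph}(f))$. Then $H_{F,f}$ is an infinite discrete subgroup of $G_{p,k}$, and every infinite discrete subgroup of $G_{p,k}$ is of the form $H_{F,f}$ for some such $F$ and $f$.
   Context: $\mathbf{T}$ is the circle group; $C_m\subset\mathbf{T}$ is the group of $m$-th roots of unity; $C_{p^\infty}=\bigcup_{\ell\ge1}C_{p^\ell}$ is the Prüfer $p$-group, with the discrete topology. $q_F:G_{p,k}\to G_{p,k}/(\{1\}\times F)=C_{p^\infty}\times(C_k\times\mathbf{T})/F$ is the quotient map, and $\mathrm{Graph}(f)=\{(w,f(w)):w\in C_{p^\infty}\}$. *)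

theory Defs
  imports "HOL-Analysis.Analysis" "HOL-Algebra.Algebra"
begin

text \<open>All groups are realised as subgroups of the multiplicative group of complex numbers
  (or products thereof), with componentwise multiplication.\<close>

definition circle_grp :: "complex monoid" where
  "circle_grp = \<lparr>carrier = sphere 0 1, mult = (*), one = 1\<rparr>"

definition roots_grp :: "nat \<Rightarrow> complex monoid" where
  "roots_grp m = \<lparr>carrier = {z. z ^ m = 1}, mult = (*), one = 1\<rparr>"

definition pruefer_grp :: "nat \<Rightarrow> complex monoid" where
  "pruefer_grp p = \<lparr>carrier = (\<Union>l\<in>{1..}. {z. z ^ (p ^ l) = 1}), mult = (*), one = 1\<rparr>"

definition K_grp :: "nat \<Rightarrow> (complex \<times> complex) monoid" where
  "K_grp k = roots_grp k \<times>\<times> circle_grp"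

definition G_grp :: "nat \<Rightarrow> nat \<Rightarrow> (complex \<times> complex \<times> complex) monoid" where
  "G_grp p k = pruefer_grp p \<times>\<times> K_grp k"

definition G_top :: "nat \<Rightarrow> nat \<Rightarrow> (complex \<times> complex \<times> complex) topology" where
  "G_top p k = prod_topology (discrete_topology (carrier (pruefer_grp p)))
      (prod_topology (discrete_topology (carrier (roots_grp k)))
                     (subtopology euclidean (sphere 0 1)))"

definition discrete_subgroup :: "nat \<Rightarrow> nat \<Rightarrow> (complex \<times> complex \<times> complex) set \<Rightarrow> bool" where
  "discrete_subgroup p k H \<longleftrightarrow>
     subgroup H (G_grp p k) \<and> subtopology (G_top p k) H = discrete_topology H"

text \<open>H_(F,f) = q_F^{-1}(Graph f), where q_F(w,x) = (w, F x) and f takes values in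
  the quotient group (C_k \<times> T)/F = K_grp k Mod F (cosets).\<close>
definition H_Ff :: "nat \<Rightarrow> nat \<Rightarrow> (complex \<times> complex) set \<Rightarrow> (complex \<Rightarrow> (complex \<times> complex) set)
    \<Rightarrow> (complex \<times> complex \<times> complex) set" where
  "H_Ff p k F f = {(w, x). w \<in> carrier (pruefer_grp p) \<and> x \<in> carrier (K_grp k)
                          \<and> F #>\<^bsub>K_grp k\<^esub> x = f w}"

end

theory Submission
  imports Defs
begin


lemma cgrpI:
  fixes S :: "complex set"
  assumes one: "1 \<in> S" and mul: "\<And>x y. x\<in>S \<Longrightarrow> y\<in>S \<Longrightarrow> x*y \<in> S"
    and nz: "\<And>x. x\<in>S \<Longrightarrow> x \<noteq> 0" and inv: "\<And>x. x\<in>S \<Longrightarrow> inverse x \<in> S"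
  shows "comm_group \<lparr>carrier = S, mult = (*), one = 1\<rparr>"
proof (rule comm_groupI)
  fix x assume x: "x \<in> carrier \<lparr>carrier = S, mult = (*), one = 1\<rparr>"
  have "inverse x * x = 1" using nz x by simp
  then show "\<exists>y\<in>carrier \<lparr>carrier = S, mult = (*), one = 1\<rparr>. y \<otimes>\<^bsub>\<lparr>carrier = S, mult = (*), one = 1\<rparr>\<^esub> x = \<one>\<^bsub>\<lparr>carrier = S, mult = (*), one = 1\<rparr>\<^esub>"
    using inv x by auto
qed (use assms in \<open>auto simp: mult.assoc mult.commute\<close>)

lemma pruefer_cg: assumes "p > 0" shows "comm_group (pruefer_grp p)"
  unfolding pruefer_grp_def
proof (rule cgrpI)
  show "1 \<in> (\<Union>l\<in>{1..}. {z::complex. z ^ (p ^ l) = 1})" by auto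
  fix x y :: complex assume x: "x \<in> (\<Union>l\<in>{1..}. {z::complex. z ^ (p ^ l) = 1})"
  then obtain l where l: "l \<ge> 1" "x ^ (p ^ l) = 1" by auto
  show "x \<noteq> 0" using l assms by (metis power_0_left power_eq_0_iff zero_neq_one)
  show "inverse x \<in> (\<Union>l\<in>{1..}. {z::complex. z ^ (p ^ l) = 1})"
    using l by (auto simp: power_inverse intro!: bexI[of _ l])
  assume "y \<in> (\<Union>l\<in>{1..}. {z::complex. z ^ (p ^ l) = 1})"
  then obtain m where m: "m \<ge> 1" "y ^ (p ^ m) = 1" by auto
  have "(x*y) ^ (p^(l+m)) = 1"
    by (simp add: power_mult_distrib power_add power_mult l m)
      (metis l(2) m(2) mult.commute power_mult power_one)
  then show "x*y \<in> (\<Union>l\<in>{1..}. {z::complex. z ^ (p ^ l) = 1})" using l by auto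
qed

lemma roots_cg: assumes "k > 0" shows "comm_group (roots_grp k)"
  unfolding roots_grp_def
  apply (rule cgrpI)
  using assms by (auto simp: power_mult_distrib power_inverse power_0_left)

lemma circle_cg: "comm_group circle_grp"
  unfolding circle_grp_def
  apply (rule cgrpI)
  by (auto simp: norm_mult norm_inverse)

lemma DirProd_cg: assumes "comm_group A" "comm_group B" shows "comm_group (A \<times>\<times> B)"
proof -
  interpret A: comm_group A by fact
  interpret B: comm_group B by fact
  interpret AB: group "A \<times>\<times> B" by (rule DirProd_group) (simp_all add: A.group_axioms B.group_axioms)
  show ?thesis by (rule AB.group_comm_groupI) (auto simp: A.m_comm B.m_comm)
qed

lemma K_cg: "k > 0 \<Longrightarrow> comm_group (K_grp k)"
  unfolding K_grp_def by (intro DirProd_cg roots_cg circle_cg)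

lemma G_g: "p > 0 \<Longrightarrow> k > 0 \<Longrightarrow> group (G_grp p k)"
  unfolding G_grp_def by (intro DirProd_group comm_group.axioms(2) K_cg pruefer_cg)

lemma pruefer_simps [simp]:
  "carrier (pruefer_grp p) = (\<Union>l\<in>{1..}. {z. z ^ (p ^ l) = 1})"
  "x \<otimes>\<^bsub>pruefer_grp p\<^esub> y = x * y" "\<one>\<^bsub>pruefer_grp p\<^esub> = 1"
  by (simp_all add: pruefer_grp_def)

lemma pruefer_pow [simp]: "x [^]\<^bsub>pruefer_grp p\<^esub> (n::nat) = x ^ n"
  by (induction n) simp_all

lemma K_simps [simp]:
  "carrier (K_grp k) = {z. z ^ k = 1} \<times> sphere 0 1"
  "(a,b) \<otimes>\<^bsub>K_grp k\<^esub> (c,d) = (a * c, b * d)" "\<one>\<^bsub>K_grp k\<^esub> = (1,1)"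
  by (simp_all add: K_grp_def roots_grp_def circle_grp_def)

lemma K_inv: assumes "k > 0" "x \<in> carrier (K_grp k)"
  shows "inv\<^bsub>K_grp k\<^esub> x = (inverse (fst x), inverse (snd x))"
proof -
  interpret K: comm_group "K_grp k" using K_cg assms by blast
  show ?thesis
    apply (rule K.inv_equality)
    using assms apply (auto simp: power_inverse norm_inverse power_0_left)
    apply (metis left_inverse power_0_left zero_neq_one neq0_conv)
    by (metis left_inverse norm_zero zero_neq_one)
qed



lemma pruefer_infinite: assumes "Factorial_Ring.prime (p::nat)" shows "infinite (carrier (pruefer_grp p))"
proof
  assume fin: "finite (carrier (pruefer_grp p))"
  let ?l = "Suc (card (carrier (pruefer_grp p)))"
  have p2: "p \<ge> 2" using assms prime_ge_2_nat by blast
  have sub: "{z::complex. z ^ (p ^ ?l) = 1} \<subseteq> carrier (pruefer_grp p)" by auto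
  have "card {z::complex. z ^ (p ^ ?l) = 1} = p ^ ?l"
    by (rule card_roots_unity_eq) (use p2 in auto)
  moreover have "?l < 2 ^ ?l" by (rule less_exp)
  moreover have "(2::nat) ^ ?l \<le> p ^ ?l" using p2 by (intro power_mono) simp_all
  moreover have "card {z::complex. z ^ (p ^ ?l) = 1} \<le> card (carrier (pruefer_grp p))"
    using card_mono[OF fin sub] .
  ultimately show False by linarith
qed

lemma part1:
  fixes p k :: nat
  assumes p: "Factorial_Ring.prime p" and k: "k > 0"
    and F: "finite F" "subgroup F (K_grp k)" and f: "f \<in> hom (pruefer_grp p) (K_grp k Mod F)"
  shows "infinite (H_Ff p k F f) \<and> discrete_subgroup p k (H_Ff p k F f)"
proof -
  have p0: "p > 0" using p prime_gt_0_nat by blast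
  interpret P: comm_group "pruefer_grp p" using pruefer_cg p0 by blast
  interpret K: comm_group "K_grp k" using K_cg k by blast
  interpret N: normal F "K_grp k" using K.subgroup_imp_normal F(2) by blast
  interpret Q: group "K_grp k Mod F" by (rule N.factorgroup_is_group)
  interpret fh: group_hom "pruefer_grp p" "K_grp k Mod F" f
    by (simp add: group_hom_def group_hom_axioms_def f P.group_axioms Q.group_axioms)
  interpret G: group "G_grp p k" using G_g p0 k by blast
  let ?H = "H_Ff p k F f"
  have Fsub: "F \<subseteq> carrier (K_grp k)" using F(2) subgroup.subset by blast
  have fw: "\<exists>x\<in>carrier (K_grp k). f w = F #>\<^bsub>K_grp k\<^esub> x" if "w \<in> carrier (pruefer_grp p)" for w
  proof -
    have "f w \<in> carrier (K_grp k Mod F)" using fh.hom_closed that by blast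
    then show ?thesis by (auto simp: carrier_FactGroup)
  qed
  have sub: "subgroup ?H (G_grp p k)"
  proof (rule G.subgroupI)
    show "?H \<subseteq> carrier (G_grp p k)" by (auto simp: H_Ff_def G_grp_def)
    have "f \<one>\<^bsub>pruefer_grp p\<^esub> = F" using fh.hom_one by simp
    moreover have "F #>\<^bsub>K_grp k\<^esub> \<one>\<^bsub>K_grp k\<^esub> = F" using K.coset_mult_one Fsub by blast
    ultimately have "(1, (1,1)) \<in> ?H" unfolding H_Ff_def by auto
    then show "?H \<noteq> {}" by blast
  next
    fix a assume a: "a \<in> ?H"
    then obtain w x where wx: "a = (w,x)" "w \<in> carrier (pruefer_grp p)" "x \<in> carrier (K_grp k)"
      "F #>\<^bsub>K_grp k\<^esub> x = f w" by (auto simp: H_Ff_def simp del: K_simps pruefer_simps)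
    have "inv\<^bsub>G_grp p k\<^esub> a = (inv\<^bsub>pruefer_grp p\<^esub> w, inv\<^bsub>K_grp k\<^esub> x)"
      unfolding G_grp_def wx(1) by (rule inv_DirProd) (use wx in \<open>auto simp del: K_simps pruefer_simps intro: P.group_axioms K.group_axioms\<close>)
    moreover have "f (inv\<^bsub>pruefer_grp p\<^esub> w) = F #>\<^bsub>K_grp k\<^esub> inv\<^bsub>K_grp k\<^esub> x"
    proof -
      have "f (inv\<^bsub>pruefer_grp p\<^esub> w) = inv\<^bsub>K_grp k Mod F\<^esub> (f w)" using fh.hom_inv wx(2) by blast
      also have "\<dots> = set_inv\<^bsub>K_grp k\<^esub> (F #>\<^bsub>K_grp k\<^esub> x)"
        using N.inv_FactGroup fh.hom_closed wx by metis
      also have "\<dots> = F #>\<^bsub>K_grp k\<^esub> inv\<^bsub>K_grp k\<^esub> x" using N.rcos_inv wx(3) by blast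
      finally show ?thesis .
    qed
    ultimately show "inv\<^bsub>G_grp p k\<^esub> a \<in> ?H" unfolding H_Ff_def
      using wx P.inv_closed K.inv_closed by (simp del: K_simps pruefer_simps)
  next
    fix a b assume a: "a \<in> ?H" and b: "b \<in> ?H"
    then obtain w x where wx: "a = (w,x)" "w \<in> carrier (pruefer_grp p)" "x \<in> carrier (K_grp k)"
      "F #>\<^bsub>K_grp k\<^esub> x = f w" by (auto simp: H_Ff_def simp del: K_simps pruefer_simps)
    obtain w' x' where wx': "b = (w',x')" "w' \<in> carrier (pruefer_grp p)" "x' \<in> carrier (K_grp k)"
      "F #>\<^bsub>K_grp k\<^esub> x' = f w'" using b by (auto simp: H_Ff_def simp del: K_simps pruefer_simps)
    have "a \<otimes>\<^bsub>G_grp p k\<^esub> b = (w \<otimes>\<^bsub>pruefer_grp p\<^esub> w', x \<otimes>\<^bsub>K_grp k\<^esub> x')"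
      unfolding G_grp_def wx(1) wx'(1) by (rule mult_DirProd)
    moreover have "f (w \<otimes>\<^bsub>pruefer_grp p\<^esub> w') = F #>\<^bsub>K_grp k\<^esub> (x \<otimes>\<^bsub>K_grp k\<^esub> x')"
    proof -
      have "f (w \<otimes>\<^bsub>pruefer_grp p\<^esub> w') = f w \<otimes>\<^bsub>K_grp k Mod F\<^esub> f w'" using fh.hom_mult wx wx' by blast
      also have "\<dots> = (F #>\<^bsub>K_grp k\<^esub> x) <#>\<^bsub>K_grp k\<^esub> (F #>\<^bsub>K_grp k\<^esub> x')" using wx wx' by simp
      also have "\<dots> = F #>\<^bsub>K_grp k\<^esub> (x \<otimes>\<^bsub>K_grp k\<^esub> x')" using N.rcos_sum wx wx' by blast
      finally show ?thesis .
    qed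
    ultimately show "a \<otimes>\<^bsub>G_grp p k\<^esub> b \<in> ?H" unfolding H_Ff_def
      using wx wx' P.m_closed K.m_closed by (simp del: K_simps pruefer_simps)
  qed
  have "fst ` ?H = carrier (pruefer_grp p)"
  proof
    show "fst ` ?H \<subseteq> carrier (pruefer_grp p)" by (auto simp: H_Ff_def simp del: K_simps pruefer_simps)
    show "carrier (pruefer_grp p) \<subseteq> fst ` ?H"
    proof
      fix w assume w: "w \<in> carrier (pruefer_grp p)"
      then obtain x where "x \<in> carrier (K_grp k)" "f w = F #>\<^bsub>K_grp k\<^esub> x" using fw by blast
      then have "(w,x) \<in> ?H" using w by (simp add: H_Ff_def del: K_simps pruefer_simps)
      then show "w \<in> fst ` ?H" by force
    qed
  qed
  then have inf: "infinite ?H" using pruefer_infinite[OF p] by (metis finite_imageI)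
  have "subtopology (G_top p k) ?H = discrete_topology ?H"
    unfolding eq_commute[of "subtopology _ _"] discrete_topology_unique
  proof (intro conjI ballI)
    show "topspace (subtopology (G_top p k) ?H) = ?H"
      by (auto simp: G_top_def H_Ff_def roots_grp_def K_grp_def circle_grp_def)
  next
    fix h assume h: "h \<in> ?H"
    then obtain w c t where wx: "h = (w,(c,t))" "w \<in> carrier (pruefer_grp p)" "(c,t) \<in> carrier (K_grp k)"
      "F #>\<^bsub>K_grp k\<^esub> (c,t) = f w" by (auto simp: H_Ff_def simp del: K_simps pruefer_simps)
    have finD: "finite (snd ` (F #>\<^bsub>K_grp k\<^esub> (c,t)))"
      using F(1) by (simp add: r_coset_def del: K_simps)
    obtain d where d: "d > 0" "\<And>y. y \<in> snd ` (F #>\<^bsub>K_grp k\<^esub> (c,t)) \<Longrightarrow> y \<noteq> t \<Longrightarrow> d \<le> dist t y"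
      using finite_set_avoid[OF finD, of t] by blast
    let ?U = "{w} \<times> ({c} \<times> (sphere 0 1 \<inter> ball t d))"
    have "openin (G_top p k) ?U"
      unfolding G_top_def openin_prod_Times_iff using wx by (auto simp: roots_grp_def)
    moreover have "{h} = ?U \<inter> ?H"
    proof
      show "{h} \<subseteq> ?U \<inter> ?H" using h wx d by auto
      show "?U \<inter> ?H \<subseteq> {h}"
      proof
        fix y assume y: "y \<in> ?U \<inter> ?H"
        then obtain t' where y': "y = (w,(c,t'))" "t' \<in> ball t d" by auto
        then have "F #>\<^bsub>K_grp k\<^esub> (c,t') = f w" "(c,t') \<in> carrier (K_grp k)"
          using y by (auto simp: H_Ff_def simp del: K_simps pruefer_simps)
        then have "(c,t') \<in> F #>\<^bsub>K_grp k\<^esub> (c,t)" using wx K.rcos_self F(2) by metis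
        then have "t' \<in> snd ` (F #>\<^bsub>K_grp k\<^esub> (c,t))" by force
        then have "t' = t" using d y' by (metis mem_ball not_le)
        then show "y \<in> {h}" using y' wx by simp
      qed
    qed
    ultimately show "openin (subtopology (G_top p k) ?H) {h}"
      unfolding openin_subtopology by blast
  qed
  then show ?thesis using inf sub by (simp add: discrete_subgroup_def)
qed



lemma pruefer_sub_all:
  assumes p: "Factorial_Ring.prime p" and Qs: "Q \<subseteq> carrier (pruefer_grp p)" and inf: "infinite Q"
    and one: "1 \<in> Q" and mul: "\<And>x y. x\<in>Q \<Longrightarrow> y\<in>Q \<Longrightarrow> x*y \<in> Q"
  shows "Q = carrier (pruefer_grp p)"
proof
  show "carrier (pruefer_grp p) \<subseteq> Q"
  proof
    fix z assume "z \<in> carrier (pruefer_grp p)"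
    then obtain l where l: "l \<ge> 1" "z^(p^l) = 1" by auto
    have p0: "p > 0" using p prime_gt_0_nat by blast
    interpret P: comm_group "pruefer_grp p" using pruefer_cg p0 by blast
    have "finite {z::complex. z^(p^l) = 1}" by (intro finite_roots_unity) (use p0 in simp)
    then have "\<not> Q \<subseteq> {z. z^(p^l) = 1}" using inf finite_subset by blast
    then obtain q where q: "q\<in>Q" "q^(p^l) \<noteq> 1" by auto
    have qP: "q \<in> carrier (pruefer_grp p)" using q Qs by auto
    then obtain m where m: "q^(p^m) = 1" by auto
    have "P.ord q dvd p^m" using P.pow_eq_id[OF qP, of "p^m"] m by simp
    then obtain n where n: "n \<le> m" "P.ord q = p^n" using divides_primepow_nat p by blast
    have ln: "l \<le> n"
    proof (rule ccontr)
      assume "\<not> l \<le> n" then have "p^n dvd p^l" by (simp add: le_imp_power_dvd)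
      then have "q^(p^l) = 1" using P.pow_eq_id[OF qP, of "p^l"] n by simp
      with q show False by simp
    qed
    have qn: "q^(p^n) = 1" using P.pow_eq_id[OF qP, of "p^n"] n by simp
    let ?S = "(\<lambda>i. q^i) ` {0..P.ord q - 1}"
    have inj: "inj_on (\<lambda>i. q^i) {0..P.ord q - 1}" using P.ord_inj[OF qP] by simp
    have pn: "p^n > 0" using p0 by simp
    have cS: "card ?S = p^n" using card_image[OF inj] n pn by simp
    have "?S \<subseteq> {z. z^(p^n) = 1}"
    proof
      fix y assume "y \<in> ?S"
      then obtain i where "y = q^i" by auto
      have "(q^i)^(p^n) = (q^(p^n))^i" by (metis power_mult mult.commute)
      then show "y \<in> {z. z^(p^n) = 1}" using qn \<open>y = q^i\<close> by simp
    qed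
    moreover have "finite {z::complex. z^(p^n) = 1}" using pn by (intro finite_roots_unity) linarith
    moreover have "card {z::complex. z^(p^n) = 1} = p^n" using pn by (rule card_roots_unity_eq)
    ultimately have Seq: "?S = {z. z^(p^n) = 1}" using cS by (metis card_subset_eq)
    have "z^(p^n) = 1"
    proof -
      have "p^n = p^l * p^(n-l)" using ln by (simp add: power_add[symmetric])
      then show ?thesis using l by (simp add: power_mult)
    qed
    then have "z \<in> ?S" using Seq by blast
    moreover have "q^i \<in> Q" for i by (induction i) (use one mul q in auto)
    ultimately show "z \<in> Q" by auto
  qed
qed (use Qs in auto)


lemma part2:
  fixes p k :: nat
  assumes p: "Factorial_Ring.prime p" and k: "k > 0"
    and infH: "infinite H" and dH: "discrete_subgroup p k H"
  shows "\<exists>F f. finite F \<and> subgroup F (K_grp k) \<and>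
               f \<in> hom (pruefer_grp p) (K_grp k Mod F) \<and> H = H_Ff p k F f"
proof -
  have p0: "p > 0" using p prime_gt_0_nat by blast
  interpret P: comm_group "pruefer_grp p" using pruefer_cg p0 by blast
  interpret K: comm_group "K_grp k" using K_cg k by blast
  interpret G: group "G_grp p k" using G_g p0 k by blast
  have sH: "subgroup H (G_grp p k)" and top: "subtopology (G_top p k) H = discrete_topology H"
    using dH by (auto simp: discrete_subgroup_def)
  interpret HS: subgroup H "G_grp p k" by (rule sH)
  have Gc: "carrier (G_grp p k) = carrier (pruefer_grp p) \<times> carrier (K_grp k)"
    unfolding G_grp_def by (rule carrier_DirProd)
  have Gm: "(w,x) \<otimes>\<^bsub>G_grp p k\<^esub> (w',x') = (w \<otimes>\<^bsub>pruefer_grp p\<^esub> w', x \<otimes>\<^bsub>K_grp k\<^esub> x')" for w x w' x'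
    unfolding G_grp_def by (rule mult_DirProd)
  have G1: "\<one>\<^bsub>G_grp p k\<^esub> = (\<one>\<^bsub>pruefer_grp p\<^esub>, \<one>\<^bsub>K_grp k\<^esub>)"
    unfolding G_grp_def by (rule one_DirProd)
  have Gi: "inv\<^bsub>G_grp p k\<^esub> (w,x) = (inv\<^bsub>pruefer_grp p\<^esub> w, inv\<^bsub>K_grp k\<^esub> x)"
    if "w \<in> carrier (pruefer_grp p)" "x \<in> carrier (K_grp k)" for w x
    unfolding G_grp_def by (rule inv_DirProd) (use that in \<open>auto intro: P.group_axioms K.group_axioms\<close>)
  have Hc: "w \<in> carrier (pruefer_grp p) \<and> x \<in> carrier (K_grp k)" if "(w,x) \<in> H" for w x
    using HS.subset that Gc by blast
  define F where "F = {x \<in> carrier (K_grp k). (\<one>\<^bsub>pruefer_grp p\<^esub>, x) \<in> H}"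
  have sF: "subgroup F (K_grp k)"
  proof (rule K.subgroupI)
    show "F \<subseteq> carrier (K_grp k)" by (auto simp: F_def simp del: K_simps)
    have "\<one>\<^bsub>K_grp k\<^esub> \<in> F" using HS.one_closed G1 by (simp add: F_def del: K_simps pruefer_simps)
    then show "F \<noteq> {}" by blast
  next
    fix a assume "a \<in> F"
    then have a: "a \<in> carrier (K_grp k)" "(\<one>\<^bsub>pruefer_grp p\<^esub>, a) \<in> H" by (auto simp: F_def simp del: K_simps pruefer_simps)
    have "inv\<^bsub>G_grp p k\<^esub> (\<one>\<^bsub>pruefer_grp p\<^esub>, a) = (\<one>\<^bsub>pruefer_grp p\<^esub>, inv\<^bsub>K_grp k\<^esub> a)"
      using Gi[of "\<one>\<^bsub>pruefer_grp p\<^esub>" a] a by (simp del: K_simps pruefer_simps)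
    then show "inv\<^bsub>K_grp k\<^esub> a \<in> F" using HS.m_inv_closed[OF a(2)] a K.inv_closed
      by (simp add: F_def del: K_simps pruefer_simps)
  next
    fix a b assume "a \<in> F" "b \<in> F"
    then have a: "a \<in> carrier (K_grp k)" "(\<one>\<^bsub>pruefer_grp p\<^esub>, a) \<in> H"
      and b: "b \<in> carrier (K_grp k)" "(\<one>\<^bsub>pruefer_grp p\<^esub>, b) \<in> H" by (auto simp: F_def simp del: K_simps pruefer_simps)
    have "(\<one>\<^bsub>pruefer_grp p\<^esub>, a) \<otimes>\<^bsub>G_grp p k\<^esub> (\<one>\<^bsub>pruefer_grp p\<^esub>, b) = (\<one>\<^bsub>pruefer_grp p\<^esub>, a \<otimes>\<^bsub>K_grp k\<^esub> b)"
      using Gm by (simp del: K_simps pruefer_simps)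
    then show "a \<otimes>\<^bsub>K_grp k\<^esub> b \<in> F" using HS.m_closed[OF a(2) b(2)] a b K.m_closed
      by (simp add: F_def del: K_simps pruefer_simps)
  qed
  interpret FS: subgroup F "K_grp k" by (rule sF)
  interpret N: normal F "K_grp k" using K.subgroup_imp_normal sF by blast
  have L1: "x' \<in> F #>\<^bsub>K_grp k\<^esub> x" if "(w,x) \<in> H" "(w,x') \<in> H" for w x x'
  proof -
    have c: "w \<in> carrier (pruefer_grp p)" "x \<in> carrier (K_grp k)" "x' \<in> carrier (K_grp k)"
      using Hc that by blast+
    have "(w,x') \<otimes>\<^bsub>G_grp p k\<^esub> inv\<^bsub>G_grp p k\<^esub> (w,x) \<in> H"
      using that HS.m_closed HS.m_inv_closed by blast
    moreover have "(w,x') \<otimes>\<^bsub>G_grp p k\<^esub> inv\<^bsub>G_grp p k\<^esub> (w,x) = (\<one>\<^bsub>pruefer_grp p\<^esub>, x' \<otimes>\<^bsub>K_grp k\<^esub> inv\<^bsub>K_grp k\<^esub> x)"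
      using Gi[OF c(1,2)] Gm c by (simp del: K_simps pruefer_simps)
    ultimately have "(\<one>\<^bsub>pruefer_grp p\<^esub>, x' \<otimes>\<^bsub>K_grp k\<^esub> inv\<^bsub>K_grp k\<^esub> x) \<in> H" by metis
    moreover have "x' \<otimes>\<^bsub>K_grp k\<^esub> inv\<^bsub>K_grp k\<^esub> x \<in> carrier (K_grp k)"
      using c by (intro K.m_closed K.inv_closed)
    ultimately have "x' \<otimes>\<^bsub>K_grp k\<^esub> inv\<^bsub>K_grp k\<^esub> x \<in> F" unfolding F_def by blast
    then show ?thesis using FS.rcos_module_rev[OF K.group_axioms c(2,3)] by blast
  qed
  have L2: "(w,x') \<in> H" if "(w,x) \<in> H" "x' \<in> carrier (K_grp k)" "x' \<in> F #>\<^bsub>K_grp k\<^esub> x" for w x x'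
  proof -
    have c: "w \<in> carrier (pruefer_grp p)" "x \<in> carrier (K_grp k)"
      using Hc that by blast+
    have "x' \<otimes>\<^bsub>K_grp k\<^esub> inv\<^bsub>K_grp k\<^esub> x \<in> F"
      using FS.rcos_module_imp[OF K.group_axioms c(2) that(3)] .
    then have "(\<one>\<^bsub>pruefer_grp p\<^esub>, x' \<otimes>\<^bsub>K_grp k\<^esub> inv\<^bsub>K_grp k\<^esub> x) \<in> H" unfolding F_def by blast
    then have "(\<one>\<^bsub>pruefer_grp p\<^esub>, x' \<otimes>\<^bsub>K_grp k\<^esub> inv\<^bsub>K_grp k\<^esub> x) \<otimes>\<^bsub>G_grp p k\<^esub> (w,x) \<in> H"
      using that(1) HS.m_closed by blast
    moreover have "(\<one>\<^bsub>pruefer_grp p\<^esub>, x' \<otimes>\<^bsub>K_grp k\<^esub> inv\<^bsub>K_grp k\<^esub> x) \<otimes>\<^bsub>G_grp p k\<^esub> (w,x) = (w, x')"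
      using Gm c that(2) by (simp add: K.m_assoc del: K_simps pruefer_simps)
    ultimately show ?thesis by simp
  qed
  have finF: "finite F"
  proof -
    have H1: "(1, (1::complex, 1::complex)) \<in> H" using HS.one_closed G1 by simp
    have "openin (subtopology (G_top p k) H) {(1,(1,1))}" using top H1 by simp
    then obtain U where U: "openin (G_top p k) U" "{(1,(1,1))} = U \<inter> H"
      by (auto simp: openin_subtopology)
    have U1: "(1,(1,1)) \<in> U" using U(2) by blast
    have A: "\<forall>x y. (x,y) \<in> U \<longrightarrow> (\<exists>U1 V. openin (discrete_topology (carrier (pruefer_grp p))) U1 \<and>
        openin (prod_topology (discrete_topology (carrier (roots_grp k))) (top_of_set (sphere 0 1))) V \<and>
        x \<in> U1 \<and> y \<in> V \<and> U1 \<times> V \<subseteq> U)"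
      using U(1) unfolding G_top_def openin_prod_topology_alt .
    from A[rule_format, OF U1] obtain U1 V where UV: "openin (prod_topology (discrete_topology (carrier (roots_grp k))) (top_of_set (sphere 0 1))) V"
        "1 \<in> U1" "(1,1) \<in> V" "U1 \<times> V \<subseteq> U"
      by blast
    have B: "\<forall>x y. (x,y) \<in> V \<longrightarrow> (\<exists>U2 W. openin (discrete_topology (carrier (roots_grp k))) U2 \<and>
        openin (top_of_set (sphere (0::complex) 1)) W \<and> x \<in> U2 \<and> y \<in> W \<and> U2 \<times> W \<subseteq> V)"
      using UV(1) unfolding openin_prod_topology_alt .
    from B[rule_format, OF UV(3)] obtain U2 W where UW: "openin (top_of_set (sphere (0::complex) 1)) W" "1 \<in> U2" "1 \<in> W" "U2 \<times> W \<subseteq> V"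
      by blast
    from UW(1) have "W \<subseteq> sphere 0 1 \<and> (\<forall>x\<in>W. \<exists>\<epsilon>. 0 < \<epsilon> \<and> ball x \<epsilon> \<inter> sphere 0 1 \<subseteq> W)"
      unfolding openin_contains_ball .
    then obtain e where e: "e > 0" "ball 1 e \<inter> sphere 0 1 \<subseteq> W" using UW(3) by blast
    have key: "t = 1" if "t \<in> sphere 0 1" "dist 1 t < e" "(1,(1,t)) \<in> H" for t
    proof -
      have "t \<in> ball 1 e \<inter> sphere 0 1" using that(1,2) by (simp only: mem_ball Int_iff simp_thms)
      then have "t \<in> W" using e(2) by blast
      then have "(1,t) \<in> V" using subsetD[OF UW(4) SigmaI[OF UW(2)]] by simp
      then have "(1,(1,t)) \<in> U" using subsetD[OF UV(4) SigmaI[OF UV(2)]] by simp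
      then have "(1,(1,t)) \<in> U \<inter> H" using that(3) by (rule IntI)
      then have "(1::complex,(1::complex,t)) = (1,(1,1))" using U(2) by (metis singletonD)
      then show ?thesis by simp
    qed
    have Fc: "x \<in> F \<longleftrightarrow> x \<in> carrier (K_grp k) \<and> (1,x) \<in> H" for x
      unfolding F_def pruefer_simps(3) by blast
    have sep: "t1 = t2" if "(c,t1) \<in> F" "(c,t2) \<in> F" "dist t1 t2 < e" for c t1 t2
    proof -
      have m: "(c,t2) \<otimes>\<^bsub>K_grp k\<^esub> inv\<^bsub>K_grp k\<^esub> (c,t1) \<in> F"
        using that FS.m_closed FS.m_inv_closed by blast
      have c1: "(c,t1) \<in> carrier (K_grp k)" "(c,t2) \<in> carrier (K_grp k)" using that FS.subset by blast+
      then have c0: "c \<noteq> 0" "t1 \<noteq> 0" "norm t1 = 1" "norm t2 = 1" using k by (auto simp: power_0_left)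
      have "inv\<^bsub>K_grp k\<^esub> (c,t1) = (inverse c, inverse t1)" using K_inv[OF k c1(1)] by simp
      then have "(c,t2) \<otimes>\<^bsub>K_grp k\<^esub> inv\<^bsub>K_grp k\<^esub> (c,t1) = (1, t2 / t1)"
        using c0 by (simp add: divide_inverse)
      then have H2: "(1,(1,t2/t1)) \<in> H" using m Fc by auto
      have sp: "t2/t1 \<in> sphere 0 1" using c0 by (simp add: norm_divide)
      have "dist 1 (t2/t1) = norm ((t1 - t2)/t1)" using c0 by (simp add: dist_norm diff_divide_distrib)
      also have "\<dots> = dist t1 t2" using c0 by (simp add: norm_divide dist_norm)
      finally have "dist 1 (t2/t1) < e" using that(3) by simp
      then have "t2/t1 = 1" using key sp H2 by blast
      then show ?thesis using c0 by (simp add: divide_eq_1_iff)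
    qed
    have finT: "finite {t. (c,t) \<in> F}" for c
    proof (rule ccontr)
      assume inf: "infinite {t. (c,t) \<in> F}"
      have sub: "{t. (c,t) \<in> F} \<subseteq> sphere 0 1" using FS.subset by auto
      obtain t0 where "t0 islimpt {t. (c,t) \<in> F}"
        using compact_sphere[of "0::complex" 1] inf sub unfolding compact_eq_Bolzano_Weierstrass by blast
      then have lim: "\<And>d. d > 0 \<Longrightarrow> \<exists>t. (c,t) \<in> F \<and> t \<noteq> t0 \<and> dist t t0 < d"
        unfolding islimpt_approachable by auto
      obtain t1 where t1: "(c,t1) \<in> F" "t1 \<noteq> t0" "dist t1 t0 < e/2" using lim[of "e/2"] e(1) by auto
      have "min (e/2) (dist t1 t0) > 0" using t1 e(1) by simp
      then obtain t2 where t2: "(c,t2) \<in> F" "t2 \<noteq> t0" "dist t2 t0 < min (e/2) (dist t1 t0)" using lim by blast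
      have ne: "t2 \<noteq> t1" using t2(3) by auto
      have "dist t1 t2 \<le> dist t1 t0 + dist t2 t0" by (rule dist_triangle2)
      then have "dist t1 t2 < e" using t1(3) t2(3) by linarith
      then show False using sep[OF t1(1) t2(1)] ne by simp
    qed
    have "F \<subseteq> (\<Union>c\<in>{z. z^k = 1}. (\<lambda>t. (c,t)) ` {t. (c,t) \<in> F})" using FS.subset by auto
    moreover have "finite (\<Union>c\<in>{z::complex. z^k = 1}. (\<lambda>t. (c,t)) ` {t. (c,t) \<in> F})"
      using finite_roots_unity[of k] k finT by auto
    ultimately show ?thesis using finite_subset by blast
  qed
  have finC: "finite (F #>\<^bsub>K_grp k\<^esub> x)" for x
    using finF by (simp add: r_coset_def del: K_simps)
  have fstH: "fst ` H = carrier (pruefer_grp p)"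
  proof (rule pruefer_sub_all[OF p])
    show "fst ` H \<subseteq> carrier (pruefer_grp p)" using Hc by auto
    show "1 \<in> fst ` H" using HS.one_closed G1 by (metis fst_conv image_eqI pruefer_simps(3))
    show "x * y \<in> fst ` H" if xy: "x \<in> fst ` H" "y \<in> fst ` H" for x y
    proof -
      obtain a b where "(x,a) \<in> H" "(y,b) \<in> H" using xy by force
      then have "(x,a) \<otimes>\<^bsub>G_grp p k\<^esub> (y,b) \<in> H" using HS.m_closed by blast
      then show ?thesis using Gm by (metis fst_conv image_eqI pruefer_simps(2))
    qed
    show "infinite (fst ` H)"
    proof
      assume fin: "finite (fst ` H)"
      have "H \<subseteq> Sigma (fst ` H) (\<lambda>w. F #>\<^bsub>K_grp k\<^esub> (SOME x. (w,x) \<in> H))"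
      proof
        fix h assume h: "h \<in> H"
        obtain w x where hw: "h = (w,x)" by (cases h) auto
        have "(w, SOME x. (w,x) \<in> H) \<in> H" using h hw by (metis someI)
        then have "x \<in> F #>\<^bsub>K_grp k\<^esub> (SOME x. (w,x) \<in> H)" using L1 h hw by blast
        then show "h \<in> Sigma (fst ` H) (\<lambda>w. F #>\<^bsub>K_grp k\<^esub> (SOME x. (w,x) \<in> H))" using h hw by force
      qed
      moreover have "finite (Sigma (fst ` H) (\<lambda>w. F #>\<^bsub>K_grp k\<^esub> (SOME x. (w,x) \<in> H)))"
        using fin finC by blast
      ultimately show False using infH finite_subset by blast
    qed
  qed
  define xw where "xw w = (SOME x. (w,x) \<in> H)" for w
  define f where "f w = F #>\<^bsub>K_grp k\<^esub> xw w" for w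
  have xwH: "(w, xw w) \<in> H" if "w \<in> carrier (pruefer_grp p)" for w
  proof -
    have "w \<in> fst ` H" using that fstH by simp
    then obtain h where h: "h \<in> H" "w = fst h" by blast
    then have "(w, snd h) \<in> H" by simp
    then show ?thesis unfolding xw_def by (rule someI)
  qed
  have xwc: "xw w \<in> carrier (K_grp k)" if "w \<in> carrier (pruefer_grp p)" for w
    using xwH[OF that] Hc by blast
  have hom: "f \<in> hom (pruefer_grp p) (K_grp k Mod F)"
  proof (rule homI)
    fix w assume "w \<in> carrier (pruefer_grp p)"
    then show "f w \<in> carrier (K_grp k Mod F)" using xwc by (simp add: f_def carrier_FactGroup del: K_simps pruefer_simps)
  next
    fix w1 w2 assume w: "w1 \<in> carrier (pruefer_grp p)" "w2 \<in> carrier (pruefer_grp p)"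
    have "(w1,xw w1) \<otimes>\<^bsub>G_grp p k\<^esub> (w2,xw w2) \<in> H" using xwH w HS.m_closed by blast
    then have "(w1 \<otimes>\<^bsub>pruefer_grp p\<^esub> w2, xw w1 \<otimes>\<^bsub>K_grp k\<^esub> xw w2) \<in> H" using Gm by simp
    then have "xw (w1 \<otimes>\<^bsub>pruefer_grp p\<^esub> w2) \<in> F #>\<^bsub>K_grp k\<^esub> (xw w1 \<otimes>\<^bsub>K_grp k\<^esub> xw w2)"
      using L1 xwH P.m_closed w by blast
    then have "F #>\<^bsub>K_grp k\<^esub> (xw w1 \<otimes>\<^bsub>K_grp k\<^esub> xw w2) = f (w1 \<otimes>\<^bsub>pruefer_grp p\<^esub> w2)"
      unfolding f_def using K.repr_independence sF xwc w K.m_closed by blast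
    moreover have "f w1 \<otimes>\<^bsub>K_grp k Mod F\<^esub> f w2 = F #>\<^bsub>K_grp k\<^esub> (xw w1 \<otimes>\<^bsub>K_grp k\<^esub> xw w2)"
      unfolding f_def using N.rcos_sum xwc w by (simp del: K_simps pruefer_simps)
    ultimately show "f (w1 \<otimes>\<^bsub>pruefer_grp p\<^esub> w2) = f w1 \<otimes>\<^bsub>K_grp k Mod F\<^esub> f w2" by simp
  qed
  have "H = H_Ff p k F f"
  proof
    show "H \<subseteq> H_Ff p k F f"
    proof
      fix h assume h: "h \<in> H"
      obtain w x where hw: "h = (w,x)" by (cases h) auto
      have c: "w \<in> carrier (pruefer_grp p)" "x \<in> carrier (K_grp k)" using Hc h hw by blast+
      have "x \<in> F #>\<^bsub>K_grp k\<^esub> xw w" using L1 xwH c h hw by blast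
      then have "F #>\<^bsub>K_grp k\<^esub> x = f w" unfolding f_def using K.repr_independence sF xwc c by metis
      then show "h \<in> H_Ff p k F f" using c hw by (simp add: H_Ff_def del: K_simps pruefer_simps)
    qed
    show "H_Ff p k F f \<subseteq> H"
    proof
      fix h assume h: "h \<in> H_Ff p k F f"
      then obtain w x where hw: "h = (w,x)" "w \<in> carrier (pruefer_grp p)" "x \<in> carrier (K_grp k)"
        "F #>\<^bsub>K_grp k\<^esub> x = f w" by (auto simp: H_Ff_def simp del: K_simps pruefer_simps)
      have "x \<in> F #>\<^bsub>K_grp k\<^esub> xw w" using hw K.rcos_self sF unfolding f_def by metis
      then show "h \<in> H" using L2 xwH hw by blast
    qed
  qed
  then show ?thesis using finF sF hom by blast
qed


theorem proposition6:
  fixes p k :: nat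
  assumes "Factorial_Ring.prime p" and "k > 0"
  shows "(\<forall>F f. finite F \<and> subgroup F (K_grp k) \<and>
            f \<in> hom (pruefer_grp p) (K_grp k Mod F) \<longrightarrow>
              infinite (H_Ff p k F f) \<and> discrete_subgroup p k (H_Ff p k F f))
       \<and> (\<forall>H. infinite H \<and> discrete_subgroup p k H \<longrightarrow>
            (\<exists>F f. finite F \<and> subgroup F (K_grp k) \<and>
               f \<in> hom (pruefer_grp p) (K_grp k Mod F) \<and> H = H_Ff p k F f))"
proof (rule conjI; intro allI impI)
  fix F f assume "finite F \<and> subgroup F (K_grp k) \<and> f \<in> hom (pruefer_grp p) (K_grp k Mod F)"
  then show "infinite (H_Ff p k F f) \<and> discrete_subgroup p k (H_Ff p k F f)"
    using part1 assms by blast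
next
  fix H assume "infinite H \<and> discrete_subgroup p k H"
  then show "\<exists>F f. finite F \<and> subgroup F (K_grp k) \<and>
               f \<in> hom (pruefer_grp p) (K_grp k Mod F) \<and> H = H_Ff p k F f"
    using part2 assms by blast
qed

end
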